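(* For any finite subset $E\subseteq\mathbb{N}$ with $|E|\ge2$, $$\mathcal{F}_E=\Big\{B\subseteq\mathbb{N}:\exists L\subseteq\Pi\setminus A_E\text{ finite with }\bigcap_{p\in L}p\mathbb{N}\cap\bigcap_{p\in A_E\setminus\Pi_E}\big(\{0,\alpha_E(p)\}+p\mathbb{Z}\big)\subseteq B\Big\},$$ where $\bigcap_{p\in\emptyset}p\mathbb{N}=\mathbb{N}$.
   Context: $\mathbb{N}=\{1,2,\dots\}$, $\mathbb{N}_0=\{0\}\cup\mathbb{N}$, $\Pi$ the set of primes, $\Pi_z$ the set of prime divisors of $z$; $p\mathbb{N}=\{pn:n\in\mathbb{N}\}$, $\{0,k\}+p\mathbb{Z}=p\mathbb{Z}\cup(k+p\mathbb{Z})$. The Kirch topology $\tau_K$ on $\mathbb{N}$ is generated by the base of all $a+b\mathbb{N}_0=\{a+bn:n\in\mathbb{N}_0\}$ with $a,b\in\mathbb{N}$ coprime and $b$ square-free. Closures $\overline{U}$ are in $\tau_K$; $\tau_x=\{U\in\tau_K:x\in U\}$. For finite $E\subseteq\mathbb{N}$, $\mathcal{F}_E=\{B\subseteq\mathbb{N}:\exists (U_x)_{x\in E}\in\prod_{x\in E}\tau_x\ (\bigcap_{x\in E}\overline{U_x}\subseteq B)\}$. For nonempty finite $E$: $\Pi_E=\bigcap_{z\in E}\Pi_z$; $A_E=\{p\in\Pi:\exists k\in\mathbb{N}\ (E\subseteq\{0,k\}+p\mathbb{Z})\}$; $\alpha_E:A_E\to\mathbb{N}_0$ is the unique function with $0\le\alpha_E(p)<p$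 and $E\subseteq\{0,\alpha_E(p)\}+p\mathbb{Z}$ for all $p\in A_E$, $\alpha_E(2)=1$, and $\alpha_E(p)=0$ for $p\in\Pi_E\setminus\{2\}$. *)

theory Defs
  imports "HOL-Analysis.Analysis" "HOL-Computational_Algebra.Computational_Algebra"
begin

text \<open>Natural numbers N = {1,2,...} are modelled as positive elements of type nat.\<close>

definition posnat :: "nat set" where
  "posnat = {n. 1 \<le> n}"

definition arith_prog :: "nat \<Rightarrow> nat \<Rightarrow> nat set" where
  "arith_prog a b = {a + b * n | n. True}"

definition kirch :: "nat topology" where
  "kirch = topology_generated_by
     {arith_prog a b | a b. 1 \<le> a \<and> 1 \<le> b \<and> coprime a b \<and> squarefree b}"

definition tau :: "nat \<Rightarrow> nat set set" where
  "tau x = {U. openin kirch U \<and> x \<in> U}"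

definition F_filter :: "nat set \<Rightarrow> nat set set" where
  "F_filter E = {B. B \<subseteq> posnat \<and>
     (\<exists>U. (\<forall>x\<in>E. U x \<in> tau x) \<and> (\<Inter>x\<in>E. kirch closure_of (U x)) \<subseteq> B)}"

definition prime_divs :: "nat \<Rightarrow> nat set" where
  "prime_divs z = {p. prime p \<and> p dvd z}"

definition Pi_E :: "nat set \<Rightarrow> nat set" where
  "Pi_E E = (\<Inter>z\<in>E. prime_divs z)"

definition A_E :: "nat set \<Rightarrow> nat set" where
  "A_E E = {p. prime p \<and> (\<exists>k. 1 \<le> k \<and> (\<forall>z\<in>E. z mod p = 0 \<or> z mod p = k mod p))}"

definition alpha_E :: "nat set \<Rightarrow> nat \<Rightarrow> nat" where
  "alpha_E E p = (THE a. a < p \<and> (\<forall>z\<in>E. z mod p = 0 \<or> z mod p = a)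
      \<and> (p = 2 \<longrightarrow> a = 1) \<and> (p \<in> Pi_E E - {2} \<longrightarrow> a = 0))"

end

theory Submission
  imports Defs
begin


lemma sqf_dvd:
  fixes g d :: nat
  assumes "squarefree g" "\<And>p. prime p \<Longrightarrow> p dvd g \<Longrightarrow> p dvd d"
  shows "g dvd d"
proof (cases "d = 0")
  case True then show ?thesis by simp
next
  case False
  have g0: "g \<noteq> 0" using assms(1) by (metis not_squarefree_0 gr0I)
  show ?thesis
  proof (rule multiplicity_le_imp_dvd[OF g0])
    fix p :: nat assume p: "prime p"
    show "multiplicity p g \<le> multiplicity p d"
    proof (cases "p dvd g")
      case True
      have "multiplicity p g \<le> 1" using assms(1) g0 p squarefree_factorial_semiring'' by blast
      moreover have "p dvd d" using assms(2) p True by blast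
      hence "multiplicity p d \<ge> 1" using False p
        using multiplicity_eq_zero_iff[of d p] False p prime_gt_1_nat[OF p] by (auto simp: not_prime_unit)
      ultimately show ?thesis by linarith
    next
      case False
      then show ?thesis by (simp add: not_dvd_imp_multiplicity_0)
    qed
  qed
qed

lemma sqf_lcm:
  fixes a b :: nat
  assumes "squarefree a" "squarefree b"
  shows "squarefree (lcm a b)"
proof -
  have a0: "a \<noteq> 0" using assms(1) by (metis not_squarefree_0)
  have b0: "b \<noteq> 0" using assms(2) by (metis not_squarefree_0)
  have l0: "lcm a b \<noteq> 0" using a0 b0 by simp
  show ?thesis
    unfolding squarefree_factorial_semiring''[OF l0]
    using assms a0 b0 by (auto simp: multiplicity_lcm squarefree_factorial_semiring'')
qed



lemma ap_pos: "1 \<le> a \<Longrightarrow> arith_prog a b \<subseteq> posnat"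
  by (auto simp: arith_prog_def posnat_def)

lemma topspace_kirch: "topspace kirch = posnat"
proof -
  have "\<Union>{arith_prog a b | a b. 1 \<le> a \<and> 1 \<le> b \<and> coprime a b \<and> squarefree b} = posnat"
  proof
    show "\<Union>{arith_prog a b | a b. 1 \<le> a \<and> 1 \<le> b \<and> coprime a b \<and> squarefree b} \<subseteq> posnat"
    proof (rule Union_least)
      fix X assume "X \<in> {arith_prog a b | a b. 1 \<le> a \<and> 1 \<le> b \<and> coprime a b \<and> squarefree b}"
      then obtain a b where "X = arith_prog a b" "1 \<le> a" by blast
      thus "X \<subseteq> posnat" using ap_pos by blast
    qed
    show "posnat \<subseteq> \<Union>{arith_prog a b | a b. 1 \<le> a \<and> 1 \<le> b \<and> coprime a b \<and> squarefree b}"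
    proof
      fix n assume "n \<in> posnat"
      hence "n \<in> arith_prog n 1" "1 \<le> n" by (auto simp: arith_prog_def posnat_def)
      moreover have "arith_prog n 1 \<in> {arith_prog a b | a b. 1 \<le> a \<and> 1 \<le> b \<and> coprime a b \<and> squarefree b}"
        using \<open>1 \<le> n\<close> by (intro CollectI exI[of _ n] exI[of _ 1]) simp
      ultimately show "n \<in> \<Union>{arith_prog a b | a b. 1 \<le> a \<and> 1 \<le> b \<and> coprime a b \<and> squarefree b}"
        by blast
    qed
  qed
  thus ?thesis unfolding kirch_def topology_generated_by_topspace by simp
qed

lemma open_ap:
  assumes "1 \<le> a" "1 \<le> b" "coprime a b" "squarefree b"
  shows "openin kirch (arith_prog a b)"
proof -
  have "arith_prog a b \<in> {arith_prog a b | a b. 1 \<le> a \<and> 1 \<le> b \<and> coprime a b \<and> squarefree b}"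
    using assms by blast
  thus ?thesis
    unfolding kirch_def openin_topology_generated_by_iff by (rule generate_topology_on.Basis)
qed


lemma ap_sub:
  assumes "c dvd d"
  shows "arith_prog n d \<subseteq> arith_prog n c"
proof
  fix y assume "y \<in> arith_prog n d"
  then obtain k where "y = n + d * k" by (auto simp: arith_prog_def)
  moreover obtain e where "d = c * e" using assms by blast
  ultimately have "y = n + c * (e * k)" by simp
  thus "y \<in> arith_prog n c" by (auto simp: arith_prog_def)
qed

lemma nbhd_gen:
  assumes "generate_topology_on {arith_prog a b | a b. 1 \<le> a \<and> 1 \<le> b \<and> coprime a b \<and> squarefree b} V"
  shows "n \<in> V \<Longrightarrow> \<exists>c. 1 \<le> c \<and> squarefree c \<and> coprime n c \<and> arith_prog n c \<subseteq> V"
  using assms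
proof (induction arbitrary: n)
  case Empty
  then show ?case by simp
next
  case (Int a b)
  from Int.prems have na: "n \<in> a" and nb: "n \<in> b" by auto
  obtain c1 where c1: "1 \<le> c1 \<and> squarefree c1 \<and> coprime n c1 \<and> arith_prog n c1 \<subseteq> a"
    using Int.IH(1)[OF na] by blast
  obtain c2 where c2: "1 \<le> c2 \<and> squarefree c2 \<and> coprime n c2 \<and> arith_prog n c2 \<subseteq> b"
    using Int.IH(2)[OF nb] by blast
  have "1 \<le> lcm c1 c2" using c1 c2 by (simp add: Suc_le_eq lcm_pos_nat)
  moreover have "squarefree (lcm c1 c2)" using c1 c2 sqf_lcm by blast
  moreover have "coprime n (lcm c1 c2)"
  proof -
    have "coprime n (c1 * c2)" using c1 c2 by simp
    moreover have "lcm c1 c2 dvd c1 * c2" by (simp add: lcm_least)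
    ultimately show ?thesis using coprime_divisors[of n n "lcm c1 c2" "c1 * c2"] by simp
  qed
  moreover have "arith_prog n (lcm c1 c2) \<subseteq> a \<inter> b"
    using ap_sub[of c1 "lcm c1 c2" n] ap_sub[of c2 "lcm c1 c2" n] c1 c2 by auto
  ultimately show ?case by blast
next
  case (UN K)
  then obtain k where "k \<in> K" "n \<in> k" by blast
  with UN.IH[of k n] show ?case by blast
next
  case (Basis s)
  then obtain a b where s: "s = arith_prog a b" "1 \<le> a" "1 \<le> b" "coprime a b" "squarefree b" by blast
  with Basis obtain m where m: "n = a + b * m" by (auto simp: arith_prog_def)
  have "coprime n b"
  proof -
    have "gcd b (m * b + a) = gcd b a" by (rule gcd_add_mult)
    hence "gcd n b = 1" using s(4) m by (simp add: gcd.commute add.commute mult.commute)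
    thus ?thesis by (simp add: coprime_iff_gcd_eq_1)
  qed
  moreover have "arith_prog n b \<subseteq> s"
  proof
    fix y assume "y \<in> arith_prog n b"
    then obtain k where "y = n + b * k" by (auto simp: arith_prog_def)
    hence "y = a + b * (m + k)" using m by (simp add: algebra_simps)
    thus "y \<in> s" using s by (auto simp: arith_prog_def)
  qed
  ultimately show ?case using s by blast
qed

lemma nbhd:
  assumes "openin kirch V" "n \<in> V"
  shows "\<exists>c. 1 \<le> c \<and> squarefree c \<and> coprime n c \<and> arith_prog n c \<subseteq> V"
proof -
  have "generate_topology_on {arith_prog a b | a b. 1 \<le> a \<and> 1 \<le> b \<and> coprime a b \<and> squarefree b} V"
    using assms(1) unfolding kirch_def openin_topology_generated_by_iff .
  thus ?thesis using nbhd_gen assms(2) by blast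
qed



lemma closure_in:
  assumes x1: "1 \<le> x" and b1: "1 \<le> b" and npos: "n \<in> posnat"
    and cond: "\<And>p. prime p \<Longrightarrow> p dvd b \<Longrightarrow> p dvd n \<or> n mod p = x mod p"
  shows "n \<in> kirch closure_of arith_prog x b"
  unfolding in_closure_of topspace_kirch
proof (intro conjI allI impI)
  show "n \<in> posnat" by fact
  fix T assume T: "n \<in> T \<and> openin kirch T"
  then obtain c where c: "1 \<le> c" "squarefree c" "coprime n c" "arith_prog n c \<subseteq> T"
    using nbhd by blast
  define g where "g = gcd b c"
  have sqg: "squarefree g" unfolding g_def using c(2) squarefree_mono[of "gcd b c" c] by simp
  have congp: "n mod p = x mod p" if p: "prime p" "p dvd g" for p
  proof -
    have pb: "p dvd b" and pc: "p dvd c" using p(2) unfolding g_def by auto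
    have "\<not> p dvd n"
    proof
      assume "p dvd n"
      hence "is_unit p" by (rule coprime_common_divisor[OF c(3) _ pc])
      thus False using p(1) by simp
    qed
    thus ?thesis using cond[OF p(1) pb] by blast
  qed
  have gdvd: "int g dvd (int x - int n)"
  proof (cases "n \<le> x")
    case True
    have "g dvd (x - n)"
    proof (rule sqf_dvd[OF sqg])
      fix p :: nat assume "prime p" "p dvd g"
      hence "n mod p = x mod p" using congp by blast
      thus "p dvd x - n" using mod_eq_dvd_iff_nat[OF True, of p] by simp
    qed
    hence "int g dvd int (x - n)" by (simp only: int_dvd_int_iff)
    thus ?thesis using True by (simp add: of_nat_diff)
  next
    case False
    have "g dvd (n - x)"
    proof (rule sqf_dvd[OF sqg])
      fix p :: nat assume "prime p" "p dvd g"
      hence "x mod p = n mod p" using congp by metis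
      moreover have "x \<le> n" using False by simp
      ultimately show "p dvd n - x" using mod_eq_dvd_iff_nat[of x n p] by simp
    qed
    hence "int g dvd int (n - x)" by (simp only: int_dvd_int_iff)
    hence "int g dvd (int n - int x)" using False by (simp add: of_nat_diff)
    hence "int g dvd - (int x - int n)" by simp
    thus ?thesis by (simp only: dvd_minus_iff)
  qed
  then obtain k where k: "int x - int n = int g * k" by blast
  obtain u v where uv: "u * int c + v * int b = gcd (int c) (int b)" using bezout_int by blast
  have "gcd (int c) (int b) = int g" unfolding g_def by (simp add: gcd.commute)
  with uv have uv': "u * int c + v * int b = int g" by simp
  define i0 where "i0 = u * k"
  define j0 where "j0 = - (v * k)"
  have e0: "int n + int c * i0 = int x + int b * j0"
  proof -
    have "int x - int n = (u * int c + v * int b) * k" using k uv' by simp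
    thus ?thesis unfolding i0_def j0_def by (simp add: algebra_simps)
  qed
  define t where "t = \<bar>i0\<bar> + \<bar>j0\<bar>"
  have t0: "t \<ge> 0" unfolding t_def by simp
  define i where "i = i0 + t * int b"
  define j where "j = j0 + t * int c"
  have "t * int b \<ge> t" using t0 b1 by (simp add: mult_le_cancel_left1)
  hence i0': "i \<ge> 0" unfolding i_def t_def by linarith
  have "t * int c \<ge> t" using t0 c(1) by (simp add: mult_le_cancel_left1)
  hence j0': "j \<ge> 0" unfolding j_def t_def by linarith
  have eij: "int n + int c * i = int x + int b * j"
    unfolding i_def j_def using e0 by (simp add: algebra_simps)
  define y where "y = n + c * nat i"
  have "int y = int n + int c * i" unfolding y_def using i0' by simp
  also have "\<dots> = int x + int b * j" by (rule eij)
  also have "\<dots> = int (x + b * nat j)" using j0' by simp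
  finally have yx: "y = x + b * nat j" by (simp only: of_nat_eq_iff)
  have "y \<in> arith_prog x b" using yx unfolding arith_prog_def by blast
  moreover have "y \<in> arith_prog n c" unfolding y_def arith_prog_def by blast
  ultimately show "\<exists>y. y \<in> arith_prog x b \<and> y \<in> T" using c(4) by blast
qed

lemma closure_out:
  assumes n: "n \<in> kirch closure_of arith_prog x b" and p: "prime p" and pb: "p dvd b"
  shows "p dvd n \<or> n mod p = x mod p"
proof (rule ccontr)
  assume H: "\<not> (p dvd n \<or> n mod p = x mod p)"
  have "n \<in> topspace kirch" by (rule subsetD[OF closure_of_subset_topspace n])
  hence npos: "n \<in> posnat" by (simp only: topspace_kirch)
  hence n1: "1 \<le> n" by (simp add: posnat_def)
  have p1: "1 \<le> p" using prime_gt_1_nat[OF p] by simp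
  have nd: "\<not> p dvd n" using H by blast
  have "coprime p n" using prime_imp_coprime[OF p nd] .
  hence cop: "coprime n p" by (simp only: coprime_commute)
  have op: "openin kirch (arith_prog n p)" using open_ap[OF n1 p1 cop squarefree_prime[OF p]] .
  have "n = n + p * 0" by simp
  hence nin: "n \<in> arith_prog n p" unfolding arith_prog_def by blast
  have "\<forall>T. n \<in> T \<and> openin kirch T \<longrightarrow> (\<exists>y. y \<in> arith_prog x b \<and> y \<in> T)"
    using n unfolding in_closure_of by (rule conjunct2)
  hence "\<exists>y. y \<in> arith_prog x b \<and> y \<in> arith_prog n p" using nin op by blast
  then obtain y where y: "y \<in> arith_prog x b" "y \<in> arith_prog n p" by blast
  obtain j where yj: "y = x + b * j" using y(1) unfolding arith_prog_def by blast
  obtain i where yi: "y = n + p * i" using y(2) unfolding arith_prog_def by blast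
  obtain e where be: "b = p * e" using pb by blast
  have "y mod p = x mod p" using yj be by (simp add: mult.assoc)
  moreover have "y mod p = n mod p" using yi by simp
  ultimately show False using H by simp
qed



lemma A_fin:
  assumes fin: "finite E" and pos: "E \<subseteq> posnat" and c2: "card E \<ge> 2"
  shows "finite (A_E E)"
proof -
  have "A_E E \<subseteq> {..Max E}"
  proof
    fix p assume pA: "p \<in> A_E E"
    show "p \<in> {..Max E}"
    proof (rule ccontr)
      assume "p \<notin> {..Max E}"
      hence big: "Max E < p" by simp
      obtain k where k: "\<forall>z\<in>E. z mod p = 0 \<or> z mod p = k mod p"
        using pA unfolding A_E_def by blast
      have "E \<subseteq> {k mod p}"
      proof
        fix z assume z: "z \<in> E"
        have "z \<le> Max E" using fin z by simp
        hence zp: "z mod p = z" using big by simp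
        have "z \<noteq> 0" using pos z by (auto simp: posnat_def)
        hence "z = k mod p" using k z zp by metis
        thus "z \<in> {k mod p}" by simp
      qed
      hence "card E \<le> card {k mod p}" by (rule card_mono[rotated]) simp
      thus False using c2 by simp
    qed
  qed
  thus ?thesis using finite_subset by blast
qed

lemma alpha_val:
  assumes pA: "p \<in> A_E E" and x: "x \<in> E" and nd: "\<not> p dvd x"
  shows "alpha_E E p = x mod p"
  unfolding alpha_E_def
proof (rule the_equality)
  have p: "prime p" using pA unfolding A_E_def by blast
  obtain k where k: "\<forall>z\<in>E. z mod p = 0 \<or> z mod p = k mod p"
    using pA unfolding A_E_def by blast
  have xm: "x mod p \<noteq> 0" using nd mod_0_imp_dvd by blast
  have "x mod p = 0 \<or> x mod p = k mod p" using k x by (rule bspec)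
  hence xk: "x mod p = k mod p" using xm by simp
  have p0: "p > 0" using prime_gt_0_nat[OF p] .
  show "x mod p < p \<and> (\<forall>z\<in>E. z mod p = 0 \<or> z mod p = x mod p) \<and>
        (p = 2 \<longrightarrow> x mod p = 1) \<and> (p \<in> Pi_E E - {2} \<longrightarrow> x mod p = 0)"
  proof (intro conjI impI)
    show "x mod p < p" using p0 by simp
    show "\<forall>z\<in>E. z mod p = 0 \<or> z mod p = x mod p"
    proof
      fix z assume "z \<in> E"
      hence "z mod p = 0 \<or> z mod p = k mod p" using k by blast
      thus "z mod p = 0 \<or> z mod p = x mod p" using xk by simp
    qed
    assume "p = 2"
    thus "x mod p = 1" using xm by simp
  next
    assume "p \<in> Pi_E E - {2}"
    hence "p \<in> (\<Inter>z\<in>E. prime_divs z)" unfolding Pi_E_def by (rule DiffD1)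
    hence "p \<in> prime_divs x" using x by (rule INT_D)
    hence "p dvd x" unfolding prime_divs_def by simp
    thus "x mod p = 0" by (rule dvd_imp_mod_0)
  qed
next
  fix a assume "a < p \<and> (\<forall>z\<in>E. z mod p = 0 \<or> z mod p = a) \<and>
        (p = 2 \<longrightarrow> a = 1) \<and> (p \<in> Pi_E E - {2} \<longrightarrow> a = 0)"
  hence "\<forall>z\<in>E. z mod p = 0 \<or> z mod p = a" by (rule conjunct1[OF conjunct2])
  hence "x mod p = 0 \<or> x mod p = a" using x by (rule bspec)
  moreover have "x mod p \<noteq> 0" using nd mod_0_imp_dvd by blast
  ultimately show "a = x mod p" by simp
qed



theorem lemma3p4:
  fixes E :: "nat set"
  assumes "finite E" and "E \<subseteq> posnat" and "card E \<ge> 2"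
  shows "F_filter E =
    {B. B \<subseteq> posnat \<and>
      (\<exists>L. finite L \<and> L \<subseteq> {p. prime p} - A_E E \<and>
        {n \<in> posnat. (\<forall>p\<in>L. p dvd n) \<and>
           (\<forall>p\<in>A_E E - Pi_E E. n mod p = 0 \<or> n mod p = alpha_E E p)} \<subseteq> B)}"
    (is "_ = ?R")
proof
  show "F_filter E \<subseteq> ?R"
  proof
    fix B assume "B \<in> F_filter E"
    hence Bpos: "B \<subseteq> posnat" and "\<exists>U. (\<forall>x\<in>E. U x \<in> tau x) \<and> (\<Inter>x\<in>E. kirch closure_of (U x)) \<subseteq> B"
      unfolding F_filter_def by auto
    then obtain U where U: "\<forall>x\<in>E. U x \<in> tau x" and UB: "(\<Inter>x\<in>E. kirch closure_of (U x)) \<subseteq> B"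
      by blast
    have "\<forall>x\<in>E. \<exists>c. 1 \<le> c \<and> squarefree c \<and> coprime x c \<and> arith_prog x c \<subseteq> U x"
    proof
      fix x assume "x \<in> E"
      hence "U x \<in> tau x" using U by (rule_tac bspec)
      hence "openin kirch (U x)" "x \<in> U x" unfolding tau_def by auto
      thus "\<exists>c. 1 \<le> c \<and> squarefree c \<and> coprime x c \<and> arith_prog x c \<subseteq> U x" by (rule nbhd)
    qed
    then obtain bb where bb: "\<forall>x\<in>E. 1 \<le> bb x \<and> squarefree (bb x) \<and> coprime x (bb x) \<and> arith_prog x (bb x) \<subseteq> U x"
      by (rule bchoice[THEN exE])
    define L where "L = {p. prime p \<and> p \<notin> A_E E \<and> (\<exists>x\<in>E. p dvd bb x)}"
    have "L \<subseteq> (\<Union>x\<in>E. {d. d dvd bb x})" unfolding L_def by auto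
    moreover have "finite (\<Union>x\<in>E. {d. d dvd bb x})"
    proof (rule finite_UN_I)
      show "finite E" by fact
      fix x assume "x \<in> E"
      hence "bb x \<noteq> 0" using bb by auto
      thus "finite {d. d dvd bb x}" by (intro finite_divisors_nat) simp
    qed
    ultimately have finL: "finite L" by (rule finite_subset)
    have Lsub: "L \<subseteq> {p. prime p} - A_E E" unfolding L_def by auto
    have "{n \<in> posnat. (\<forall>p\<in>L. p dvd n) \<and>
           (\<forall>p\<in>A_E E - Pi_E E. n mod p = 0 \<or> n mod p = alpha_E E p)} \<subseteq> B"
    proof
      fix n assume "n \<in> {n \<in> posnat. (\<forall>p\<in>L. p dvd n) \<and>
           (\<forall>p\<in>A_E E - Pi_E E. n mod p = 0 \<or> n mod p = alpha_E E p)}"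
      hence npos: "n \<in> posnat" and nL: "\<forall>p\<in>L. p dvd n"
        and nA: "\<forall>p\<in>A_E E - Pi_E E. n mod p = 0 \<or> n mod p = alpha_E E p" by auto
      have "n \<in> (\<Inter>x\<in>E. kirch closure_of (U x))"
      proof (rule INT_I)
        fix x assume xE: "x \<in> E"
        have bx: "1 \<le> bb x" "coprime x (bb x)" "arith_prog x (bb x) \<subseteq> U x" using bb xE by auto
        have x1: "1 \<le> x" using xE assms(2) unfolding posnat_def by auto
        have "n \<in> kirch closure_of arith_prog x (bb x)"
        proof (rule closure_in[OF x1 bx(1) npos])
          fix p :: nat assume p: "prime p" and pb: "p dvd bb x"
          have nd: "\<not> p dvd x"
          proof
            assume "p dvd x"
            hence "is_unit p" by (rule coprime_common_divisor[OF bx(2) _ pb])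
            thus False using p by simp
          qed
          show "p dvd n \<or> n mod p = x mod p"
          proof (cases "p \<in> A_E E")
            case True
            have "p \<notin> Pi_E E"
            proof
              assume "p \<in> Pi_E E"
              hence "p \<in> prime_divs x" unfolding Pi_E_def using xE by (rule INT_D)
              thus False using nd unfolding prime_divs_def by simp
            qed
            hence pAP: "p \<in> A_E E - Pi_E E" using True by (rule_tac DiffI)
            have "n mod p = 0 \<or> n mod p = alpha_E E p" using nA pAP by (rule bspec)
            moreover have "alpha_E E p = x mod p" by (rule alpha_val[OF True xE nd])
            ultimately show ?thesis using mod_0_imp_dvd by auto
          next
            case False
            have "p \<in> L" unfolding L_def using p False xE pb by blast
            hence "p dvd n" using nL by (rule_tac bspec)
            thus ?thesis by (rule disjI1)
          qed
        qed
        thus "n \<in> kirch closure_of (U x)" using closure_of_mono[OF bx(3)] by (rule_tac subsetD)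
      qed
      thus "n \<in> B" using UB by (rule_tac subsetD)
    qed
    thus "B \<in> ?R" using Bpos finL Lsub by blast
  qed
next
  show "?R \<subseteq> F_filter E"
  proof
    fix B assume "B \<in> ?R"
    then obtain L where Bpos: "B \<subseteq> posnat" and finL: "finite L" and Lsub: "L \<subseteq> {p. prime p} - A_E E"
      and LB: "{n \<in> posnat. (\<forall>p\<in>L. p dvd n) \<and>
           (\<forall>p\<in>A_E E - Pi_E E. n mod p = 0 \<or> n mod p = alpha_E E p)} \<subseteq> B" by blast
    have finA: "finite (A_E E)" by (rule A_fin[OF assms])
    define P where "P x = {p. prime p \<and> \<not> p dvd x \<and> (p \<in> L \<or> p \<in> A_E E - Pi_E E)}" for x
    define bb where "bb x = (\<Prod>p\<in>P x. p)" for x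
    have finP: "finite (P x)" for x
    proof -
      have "P x \<subseteq> L \<union> A_E E" unfolding P_def by auto
      thus ?thesis using finL finA by (meson finite_UnI finite_subset)
    qed
    have primeP: "prime p" if "p \<in> P x" for p x using that unfolding P_def by simp
    have bb1: "1 \<le> bb x" for x
    proof -
      have "0 < bb x" unfolding bb_def
        by (rule prod_pos) (use primeP prime_gt_0_nat in blast)
      thus ?thesis by simp
    qed
    have bbsq: "squarefree (bb x)" for x
      unfolding bb_def
    proof (rule squarefree_prod_coprime)
      fix a b assume "a \<in> P x" "b \<in> P x" "a \<noteq> b"
      thus "coprime a b" using primes_coprime primeP by blast
    next
      fix a assume "a \<in> P x"
      thus "squarefree a" using primeP squarefree_prime by blast
    qed
    have bbcop: "coprime x (bb x)" for x
      unfolding bb_def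
    proof (rule prod_coprime_right)
      fix p assume pP: "p \<in> P x"
      hence "prime p" "\<not> p dvd x" unfolding P_def by auto
      hence "coprime p x" by (rule prime_imp_coprime)
      thus "coprime x p" by (simp only: coprime_commute)
    qed
    have bbdvd: "p dvd bb x" if "p \<in> P x" for p x
      unfolding bb_def using finP that by (rule dvd_prodI)
    define U where "U x = arith_prog x (bb x)" for x
    have Utau: "\<forall>x\<in>E. U x \<in> tau x"
    proof
      fix x assume xE: "x \<in> E"
      have x1: "1 \<le> x" using xE assms(2) unfolding posnat_def by auto
      have "openin kirch (U x)" unfolding U_def by (rule open_ap[OF x1 bb1 bbcop bbsq])
      moreover have "x \<in> U x"
      proof -
        have "x = x + bb x * 0" by simp
        thus ?thesis unfolding U_def arith_prog_def by blast
      qed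
      ultimately show "U x \<in> tau x" unfolding tau_def by blast
    qed
    have "(\<Inter>x\<in>E. kirch closure_of (U x)) \<subseteq> B"
    proof
      fix n assume nI: "n \<in> (\<Inter>x\<in>E. kirch closure_of (U x))"
      have ncl: "n \<in> kirch closure_of arith_prog x (bb x)" if "x \<in> E" for x
        using nI that unfolding U_def by (rule INT_D)
      have "E \<noteq> {}" using assms(3) by auto
      then obtain x0 where x0: "x0 \<in> E" by blast
      have "n \<in> topspace kirch" by (rule subsetD[OF closure_of_subset_topspace ncl[OF x0]])
      hence npos: "n \<in> posnat" by (simp only: topspace_kirch)
      hence n1: "1 \<le> n" unfolding posnat_def by simp
      have key: "p dvd n \<or> n mod p = x mod p" if "x \<in> E" "p \<in> P x" for x p
        by (rule closure_out[OF ncl[OF that(1)] primeP[OF that(2)] bbdvd[OF that(2)]])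
      have nL: "\<forall>p\<in>L. p dvd n"
      proof
        fix p assume pL: "p \<in> L"
        have p: "prime p" and pnA: "p \<notin> A_E E" using pL Lsub by auto
        show "p dvd n"
        proof (rule ccontr)
          assume nd: "\<not> p dvd n"
          have "\<forall>z\<in>E. z mod p = 0 \<or> z mod p = n mod p"
          proof
            fix z assume zE: "z \<in> E"
            show "z mod p = 0 \<or> z mod p = n mod p"
            proof (cases "p dvd z")
              case True
              thus ?thesis by (simp add: dvd_imp_mod_0)
            next
              case False
              hence "p \<in> P z" unfolding P_def using p pL by blast
              hence "p dvd n \<or> n mod p = z mod p" by (rule key[OF zE])
              thus ?thesis using nd by simp
            qed
          qed
          hence "p \<in> A_E E" unfolding A_E_def using p n1 by blast
          thus False using pnA by contradiction
        qed
      qed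
      have nA: "\<forall>p\<in>A_E E - Pi_E E. n mod p = 0 \<or> n mod p = alpha_E E p"
      proof
        fix p assume pAP: "p \<in> A_E E - Pi_E E"
        have pA: "p \<in> A_E E" and pnP: "p \<notin> Pi_E E" using pAP by auto
        have p: "prime p" using pA unfolding A_E_def by simp
        obtain x where xE: "x \<in> E" and nd: "\<not> p dvd x"
        proof -
          have "\<not> (\<forall>z\<in>E. p \<in> prime_divs z)"
          proof
            assume "\<forall>z\<in>E. p \<in> prime_divs z"
            hence "p \<in> Pi_E E" unfolding Pi_E_def INT_iff .
            thus False using pnP by contradiction
          qed
          then obtain z where "z \<in> E" "p \<notin> prime_divs z" by blast
          moreover hence "\<not> p dvd z" using p unfolding prime_divs_def by simp
          ultimately show ?thesis using that by blast
        qed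
        have "p \<in> P x" unfolding P_def using p nd pAP by blast
        hence "p dvd n \<or> n mod p = x mod p" by (rule key[OF xE])
        moreover have "alpha_E E p = x mod p" by (rule alpha_val[OF pA xE nd])
        ultimately show "n mod p = 0 \<or> n mod p = alpha_E E p" using dvd_imp_mod_0 by auto
      qed
      have "n \<in> {n \<in> posnat. (\<forall>p\<in>L. p dvd n) \<and>
           (\<forall>p\<in>A_E E - Pi_E E. n mod p = 0 \<or> n mod p = alpha_E E p)}"
        using npos nL nA by blast
      thus "n \<in> B" using LB by (rule_tac subsetD)
    qed
    thus "B \<in> F_filter E" unfolding F_filter_def using Bpos Utau by blast
  qed
qed

end
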